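(* Let $(\Omega,\Sigma,\mu)$ be a finite measure space and let $X(\mu)$ and $Y(\mu)$ be Banach rectangular function spaces with the subsequence property. (i) If $T:X(\mu)\to Y(\mu)$ is a positive linear operator ($Tf\ge0$ whenever $f\ge 0$), then $T$ is continuous. (ii) If $X(\mu)$, with norm $\|\cdot\|$, is also a Banach rectangular function space with the subsequence property under another norm $\|\cdot\|_0$, then $\|\cdot\|$ and $\|\cdot\|_0$ are equivalent norms.
   Context: $L^0(\mu)$ is the space of equivalence classes (modulo $\mu$-a.e. equality) of real $\Sigma$-measurable functions, ordered $\mu$-a.e. A Banach rectangular function space is a vector subspace $X(\mu)\subseteq L^0(\mu)$ with a complete norm such that for some $C>0$, $\chi_Af\in X(\mu)$ and $\|\chi_Af\|\le C\|f\|$ for all $f\in X(\mu)$, $A\in\Sigma$. Subsequence property: whenever $f_n,f\in X(\mu)$ and $f_n\to f$ in norm, some subsequence converges to $f$ $\mu$-a.e. *)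

theory Defs
  imports "HOL-Analysis.Analysis"
begin

text \<open>Elements of L^0(mu) are represented by real Sigma-measurable functions; a subspace
  of L^0(mu) is represented by the set X of all representatives of its classes (so X is
  closed under a.e. equality), and a norm on it by a function N on representatives that
  is invariant under a.e. equality and vanishes exactly on the a.e.-zero functions.\<close>

definition banach_rect_fs ::
  "'a measure \<Rightarrow> ('a \<Rightarrow> real) set \<Rightarrow> (('a \<Rightarrow> real) \<Rightarrow> real) \<Rightarrow> bool" where
  "banach_rect_fs M X N \<longleftrightarrow>
     X \<subseteq> borel_measurable M \<and>
     (\<forall>f\<in>X. \<forall>g\<in>borel_measurable M. (AE x in M. f x = g x) \<longrightarrow> g \<in> X) \<and>
     (\<forall>f\<in>X. \<forall>g\<in>X. (AE x in M. f x = g x) \<longrightarrow> N f = N g) \<and>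
     (\<lambda>x. 0) \<in> X \<and>
     (\<forall>f\<in>X. \<forall>g\<in>X. (\<lambda>x. f x + g x) \<in> X) \<and>
     (\<forall>f\<in>X. \<forall>c::real. (\<lambda>x. c * f x) \<in> X) \<and>
     (\<forall>f\<in>X. N f \<ge> 0) \<and>
     (\<forall>f\<in>X. N f = 0 \<longleftrightarrow> (AE x in M. f x = 0)) \<and>
     (\<forall>f\<in>X. \<forall>c::real. N (\<lambda>x. c * f x) = \<bar>c\<bar> * N f) \<and>
     (\<forall>f\<in>X. \<forall>g\<in>X. N (\<lambda>x. f x + g x) \<le> N f + N g) \<and>
     (\<forall>s. (\<forall>n. s n \<in> X) \<and>
          (\<forall>e>0. \<exists>K. \<forall>m\<ge>K. \<forall>n\<ge>K. N (\<lambda>x. s m x - s n x) < e)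
          \<longrightarrow> (\<exists>f\<in>X. (\<lambda>n. N (\<lambda>x. s n x - f x)) \<longlonglongrightarrow> 0)) \<and>
     (\<exists>C>0. \<forall>f\<in>X. \<forall>A\<in>sets M.
          (\<lambda>x. indicator A x * f x) \<in> X \<and> N (\<lambda>x. indicator A x * f x) \<le> C * N f)"

definition subsequence_property ::
  "'a measure \<Rightarrow> ('a \<Rightarrow> real) set \<Rightarrow> (('a \<Rightarrow> real) \<Rightarrow> real) \<Rightarrow> bool" where
  "subsequence_property M X N \<longleftrightarrow>
     (\<forall>s f. (\<forall>n. s n \<in> X) \<and> f \<in> X \<and> (\<lambda>n. N (\<lambda>x. s n x - f x)) \<longlonglongrightarrow> 0
        \<longrightarrow> (\<exists>r. strict_mono r \<and> (AE x in M. (\<lambda>n. s (r n) x) \<longlonglongrightarrow> f x)))"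

definition positive_linear_op ::
  "'a measure \<Rightarrow> ('a \<Rightarrow> real) set \<Rightarrow> ('a \<Rightarrow> real) set \<Rightarrow> (('a \<Rightarrow> real) \<Rightarrow> ('a \<Rightarrow> real)) \<Rightarrow> bool" where
  "positive_linear_op M X Y T \<longleftrightarrow>
     (\<forall>f\<in>X. T f \<in> Y) \<and>
     (\<forall>f\<in>X. \<forall>g\<in>X. (AE x in M. f x = g x) \<longrightarrow> (AE x in M. T f x = T g x)) \<and>
     (\<forall>f\<in>X. \<forall>g\<in>X. AE x in M. T (\<lambda>y. f y + g y) x = T f x + T g x) \<and>
     (\<forall>f\<in>X. \<forall>c::real. AE x in M. T (\<lambda>y. c * f y) x = c * T f x) \<and>
     (\<forall>f\<in>X. (AE x in M. f x \<ge> 0) \<longrightarrow> (AE x in M. T f x \<ge> 0))"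

end

theory Submission
  imports Defs
begin


lemma baire_pseudo:
  fixes d :: "'v \<Rightarrow> 'v \<Rightarrow> real" and F :: "nat \<Rightarrow> 'v set"
  assumes sym: "\<forall>x\<in>S. \<forall>y\<in>S. d x y = d y x"
  and tri: "\<forall>x\<in>S. \<forall>y\<in>S. \<forall>z\<in>S. d x z \<le> d x y + d y z"
  and refl: "\<forall>x\<in>S. d x x = 0"
  and compl: "\<forall>s. (\<forall>n. s n \<in> S) \<and> (\<forall>e>0. \<exists>K. \<forall>m\<ge>K. \<forall>n\<ge>K. d (s m) (s n) < e)
                 \<longrightarrow> (\<exists>x\<in>S. (\<lambda>n. d (s n) x) \<longlonglongrightarrow> 0)"
  and clo: "\<forall>k s x. (\<forall>n. s n \<in> F k) \<and> x \<in> S \<and> (\<lambda>n. d (s n) x) \<longlonglongrightarrow> 0 \<longrightarrow> x \<in> F k"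
  and sub: "\<forall>k. F k \<subseteq> S" and cov: "S \<subseteq> (\<Union>k. F k)" and ne: "x0 \<in> S"
  shows "\<exists>k x r. x \<in> S \<and> r > 0 \<and> (\<forall>y\<in>S. d x y < r \<longrightarrow> y \<in> F k)"
proof (rule ccontr)
  assume H: "\<not> ?thesis"
  have nn: "d x y \<ge> 0" if "x \<in> S" "y \<in> S" for x y
    using tri refl sym that by (smt (verit))
  have H1: "\<exists>y\<in>S. d x y < r \<and> y \<notin> F k" if "x \<in> S" "r > 0" for k x r
    using H that sub by blast
  have H2: "\<exists>\<epsilon>>0. \<forall>z\<in>S. d y z < \<epsilon> \<longrightarrow> z \<notin> F k" if y: "y \<in> S" "y \<notin> F k" for k y
  proof (rule ccontr)
    assume "\<not> ?thesis"
    then have "\<forall>n. \<exists>z. z \<in> F k \<and> d y z < 1 / Suc n"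
      using sub by (metis of_nat_0_less_iff zero_less_Suc divide_pos_pos zero_less_one)
    then obtain z where z: "\<And>n. z n \<in> F k \<and> d y (z n) < 1 / Suc n" by metis
    have "(\<lambda>n. d (z n) y) \<longlonglongrightarrow> 0"
    proof (rule real_tendsto_sandwich[of "\<lambda>n. 0" _ _ "\<lambda>n. 1 / Suc n"])
      have zS: "z n \<in> S" for n using z sub by blast
      show "\<forall>\<^sub>F n in sequentially. 0 \<le> d (z n) y" using zS y nn by (intro always_eventually) blast
      have "d (z n) y \<le> 1 / Suc n" for n using z[of n] zS[of n] y sym by simp
      then show "\<forall>\<^sub>F n in sequentially. d (z n) y \<le> 1 / Suc n" by (intro always_eventually) blast
      show "(\<lambda>n. 0::real) \<longlonglongrightarrow> 0" by simp
      show "(\<lambda>n. 1 / real (Suc n)) \<longlonglongrightarrow> 0" using LIMSEQ_Suc[OF lim_const_over_n[of 1]] by simp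
    qed
    then show False using clo z y by blast
  qed
  have step: "\<exists>y r'. y \<in> S \<and> 0 < r' \<and> r' \<le> r / 4 \<and> (\<forall>z\<in>S. d y z \<le> r' \<longrightarrow> z \<notin> F k \<and> d x z < r)"
    if xr: "x \<in> S" "r > 0" for k x r
  proof -
    obtain y where y: "y \<in> S" "d x y < r/2" "y \<notin> F k" using H1[of x "r/2" k] xr by auto
    obtain \<epsilon> where e: "\<epsilon> > 0" "\<forall>z\<in>S. d y z < \<epsilon> \<longrightarrow> z \<notin> F k" using H2 y by blast
    show ?thesis
    proof (intro exI conjI ballI impI)
      show "y \<in> S" by fact
      show "0 < min (\<epsilon>/2) (r/4)" using e xr by simp
      show "min (\<epsilon>/2) (r/4) \<le> r/4" by simp
      fix z assume z: "z \<in> S" "d y z \<le> min (\<epsilon>/2) (r/4)"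
      show "z \<notin> F k" using e z by auto
      have "d x z \<le> d x y + d y z" using tri xr y z by blast
      moreover have "d y z \<le> r/4" using z by simp
      ultimately show "d x z < r" using y xr by linarith
    qed
  qed
  obtain Yf Rf where YR: "\<And>k x r. x \<in> S \<Longrightarrow> r > 0 \<Longrightarrow> Yf k x r \<in> S \<and> 0 < Rf k x r \<and> Rf k x r \<le> r / 4 \<and>
       (\<forall>z\<in>S. d (Yf k x r) z \<le> Rf k x r \<longrightarrow> z \<notin> F k \<and> d x z < r)"
  proof -
    define Q where "Q k x r p \<longleftrightarrow> fst p \<in> S \<and> 0 < snd p \<and> snd p \<le> r / 4 \<and>
       (\<forall>z\<in>S. d (fst p) z \<le> snd p \<longrightarrow> z \<notin> F k \<and> d x z < r)" for k x r p
    have "Q k x r (SOME p. Q k x r p)" if "x \<in> S" "r > 0" for k x r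
    proof (rule someI_ex)
      show "\<exists>p. Q k x r p" using step[OF that, of k] unfolding Q_def by auto
    qed
    then show ?thesis using that[of "\<lambda>k x r. fst (SOME p. Q k x r p)" "\<lambda>k x r. snd (SOME p. Q k x r p)"]
      unfolding Q_def by blast
  qed
  define sq where "sq = rec_nat (x0, 1::real) (\<lambda>k p. (Yf k (fst p) (snd p), Rf k (fst p) (snd p)))"
  define xs where "xs k = fst (sq k)" for k
  define rs where "rs k = snd (sq k)" for k
  have sq0: "xs 0 = x0" "rs 0 = 1" by (simp_all add: xs_def rs_def sq_def)
  have sqS: "xs (Suc k) = Yf k (xs k) (rs k)" "rs (Suc k) = Rf k (xs k) (rs k)" for k
    by (simp_all add: xs_def rs_def sq_def)
  have inv: "xs k \<in> S \<and> rs k > 0 \<and> rs k \<le> (1/4)^k" for k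
  proof (induction k)
    case 0 then show ?case using sq0 ne by simp
  next
    case (Suc k)
    then show ?case using YR[of "xs k" "rs k" k] sqS[of k] by auto
  qed
  have nest: "d (xs n) z \<le> rs n" if "n \<le> m" "z \<in> S" "d (xs m) z \<le> rs m" for n m z
    using that
  proof (induction m arbitrary: n rule: nat_induct)
    case 0 then show ?case by simp
  next
    case (Suc m)
    show ?case
    proof (cases "n = Suc m")
      case True then show ?thesis using Suc by simp
    next
      case False
      then have "n \<le> m" using Suc by simp
      have "d (xs m) z < rs m" using YR[of "xs m" "rs m" m] inv[of m] Suc.prems sqS[of m] by auto
      then show ?thesis using Suc.IH[OF \<open>n \<le> m\<close> Suc.prems(2)] by simp
    qed
  qed
  have out: "z \<notin> F k" if "z \<in> S" "d (xs (Suc k)) z \<le> rs (Suc k)" for z k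
    using YR[of "xs k" "rs k" k] inv[of k] that sqS[of k] by auto
  have cauchy: "\<forall>e>0. \<exists>K. \<forall>m\<ge>K. \<forall>n\<ge>K. d (xs m) (xs n) < e"
  proof (intro allI impI)
    fix e :: real assume "e > 0"
    then obtain K where K: "(1/4::real)^K < e/2" using real_arch_pow_inv[of "e/2" "1/4"] by auto
    show "\<exists>K. \<forall>m\<ge>K. \<forall>n\<ge>K. d (xs m) (xs n) < e"
    proof (intro exI allI impI)
      fix m n assume mn: "m \<ge> K" "n \<ge> K"
      have a: "d (xs K) (xs m) \<le> rs K" using nest[OF mn(1), of "xs m"] inv[of m] refl by simp
      have b: "d (xs K) (xs n) \<le> rs K" using nest[OF mn(2), of "xs n"] inv[of n] refl by simp
      have "d (xs m) (xs n) \<le> d (xs m) (xs K) + d (xs K) (xs n)" using tri inv by blast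
      also have "\<dots> \<le> 2 * rs K" using a b sym inv by (metis mult_2 add_mono)
      also have "\<dots> < e" using inv[of K] K by linarith
      finally show "d (xs m) (xs n) < e" .
    qed
  qed
  obtain x where x: "x \<in> S" "(\<lambda>n. d (xs n) x) \<longlonglongrightarrow> 0" using compl cauchy inv by blast
  have close: "d (xs n) x \<le> rs n" for n
  proof (rule ccontr)
    assume "\<not> ?thesis"
    then have "d (xs n) x - rs n > 0" by simp
    then obtain M where M: "\<forall>m\<ge>M. \<bar>d (xs m) x\<bar> < d (xs n) x - rs n"
      using x(2) unfolding LIMSEQ_iff by (metis diff_zero real_norm_def)
    let ?m = "max M n"
    have "d (xs n) (xs ?m) \<le> rs n" using nest[of n ?m "xs ?m"] inv[of ?m] refl by (simp add: less_imp_le)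
    moreover have "d (xs n) x \<le> d (xs n) (xs ?m) + d (xs ?m) x" using tri inv x by blast
    moreover have "\<bar>d (xs ?m) x\<bar> < d (xs n) x - rs n" using M by simp
    ultimately show False by linarith
  qed
  obtain k where "x \<in> F k" using cov x by blast
  then show False using out[OF x(1) close[of "Suc k"]] by simp
qed



definition sn :: "('a \<Rightarrow> real) set \<Rightarrow> (('a \<Rightarrow> real) \<Rightarrow> real) \<Rightarrow> bool" where
  "sn X P \<longleftrightarrow> (\<lambda>x. 0) \<in> X \<and> (\<forall>f\<in>X. \<forall>g\<in>X. (\<lambda>x. f x + g x) \<in> X) \<and>
     (\<forall>f\<in>X. \<forall>c. (\<lambda>x. c * f x) \<in> X) \<and> (\<forall>f\<in>X. P f \<ge> 0) \<and>
     (\<forall>f\<in>X. \<forall>c. P (\<lambda>x. c * f x) = \<bar>c\<bar> * P f) \<and>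
     (\<forall>f\<in>X. \<forall>g\<in>X. P (\<lambda>x. f x + g x) \<le> P f + P g)"

definition cmpl :: "('a \<Rightarrow> real) set \<Rightarrow> (('a \<Rightarrow> real) \<Rightarrow> real) \<Rightarrow> bool" where
  "cmpl X P \<longleftrightarrow> (\<forall>s. (\<forall>n. s n \<in> X) \<and>
          (\<forall>e>0. \<exists>K. \<forall>m\<ge>K. \<forall>n\<ge>K. P (\<lambda>x. s m x - s n x) < e)
          \<longrightarrow> (\<exists>f\<in>X. (\<lambda>n. P (\<lambda>x. s n x - f x)) \<longlonglongrightarrow> 0))"

context
  fixes X :: "('a \<Rightarrow> real) set" and P :: "('a \<Rightarrow> real) \<Rightarrow> real"
  assumes sn: "sn X P"
begin

lemma sn_zero_mem: "(\<lambda>x. 0) \<in> X" using sn by (simp add: sn_def)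
lemma sn_add_mem: "f \<in> X \<Longrightarrow> g \<in> X \<Longrightarrow> (\<lambda>x. f x + g x) \<in> X" using sn by (simp add: sn_def)
lemma sn_scale_mem: "f \<in> X \<Longrightarrow> (\<lambda>x. c * f x) \<in> X" using sn by (simp add: sn_def)
lemma sn_nn: "f \<in> X \<Longrightarrow> P f \<ge> 0" using sn by (simp add: sn_def)
lemma sn_scale: "f \<in> X \<Longrightarrow> P (\<lambda>x. c * f x) = \<bar>c\<bar> * P f" using sn by (simp add: sn_def)
lemma sn_add: "f \<in> X \<Longrightarrow> g \<in> X \<Longrightarrow> P (\<lambda>x. f x + g x) \<le> P f + P g" using sn by (simp add: sn_def)

lemma sn_zero: "P (\<lambda>x. 0) = 0"
  using sn_scale[OF sn_zero_mem, of 0] by simp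

lemma sn_diff_mem: "f \<in> X \<Longrightarrow> g \<in> X \<Longrightarrow> (\<lambda>x. f x - g x) \<in> X"
proof -
  assume "f \<in> X" "g \<in> X"
  then have "(\<lambda>x. f x + (-1) * g x) \<in> X" by (intro sn_add_mem sn_scale_mem)
  then show ?thesis by simp
qed

lemma sn_neg: "f \<in> X \<Longrightarrow> P (\<lambda>x. - f x) = P f"
  using sn_scale[of f "-1"] by simp

lemma sn_diff_sym: "f \<in> X \<Longrightarrow> g \<in> X \<Longrightarrow> P (\<lambda>x. f x - g x) = P (\<lambda>x. g x - f x)"
  using sn_neg[OF sn_diff_mem, of g f] by simp

lemma sn_diff_self: "P (\<lambda>x. f x - f x) = 0" using sn_zero by simp

lemma sn_tri: "f \<in> X \<Longrightarrow> g \<in> X \<Longrightarrow> h \<in> X \<Longrightarrow>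
   P (\<lambda>x. f x - h x) \<le> P (\<lambda>x. f x - g x) + P (\<lambda>x. g x - h x)"
  using sn_add[OF sn_diff_mem sn_diff_mem, of f g g h] by simp

lemma sn_sub: "f \<in> X \<Longrightarrow> g \<in> X \<Longrightarrow> P (\<lambda>x. f x - g x) \<le> P f + P g"
  using sn_add[OF _ sn_scale_mem, of f g "-1"] sn_scale[of g "-1"] by simp

lemma sn_sum: "finite I \<Longrightarrow> (\<forall>i\<in>I. v i \<in> X) \<Longrightarrow>
   (\<lambda>x. \<Sum>i\<in>I. v i x) \<in> X \<and> P (\<lambda>x. \<Sum>i\<in>I. v i x) \<le> (\<Sum>i\<in>I. P (v i))"
proof (induction I rule: finite_induct)
  case empty then show ?case using sn_zero sn_zero_mem by simp
next
  case (insert i I)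
  then have a: "(\<lambda>x. \<Sum>i\<in>I. v i x) \<in> X" "P (\<lambda>x. \<Sum>i\<in>I. v i x) \<le> (\<Sum>i\<in>I. P (v i))" "v i \<in> X" by auto
  have "(\<lambda>x. \<Sum>j\<in>insert i I. v j x) = (\<lambda>x. v i x + (\<Sum>j\<in>I. v j x))" using insert by simp
  then show ?case using sn_add_mem[OF a(3) a(1)] sn_add[OF a(3) a(1)] a(2) insert by simp
qed

lemma sn_cauchy:
  assumes s: "\<forall>n. s n \<in> X" and B: "B \<ge> 0"
    and b: "\<And>m n. n \<le> m \<Longrightarrow> P (\<lambda>x. s m x - s n x) \<le> B * (1/2)^n"
  shows "\<forall>e>0. \<exists>K. \<forall>m\<ge>K. \<forall>n\<ge>K. P (\<lambda>x. s m x - s n x) < e"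
proof (intro allI impI)
  fix e :: real assume e: "e > 0"
  obtain K where K: "(1/2::real)^K < e / (B + 1)" using real_arch_pow_inv[of "e/(B+1)" "1/2"] e B by auto
  show "\<exists>K. \<forall>m\<ge>K. \<forall>n\<ge>K. P (\<lambda>x. s m x - s n x) < e"
  proof (intro exI allI impI)
    fix m n assume mn: "m \<ge> K" "n \<ge> K"
    have bb: "B * (1/2)^k < e" if "k \<ge> K" for k
    proof -
      have "(1/2::real)^k \<le> (1/2)^K" using that by (simp add: power_decreasing)
      then have "B * (1/2::real)^k \<le> B * (1/2)^K" using B by (simp add: mult_left_mono)
      also have "\<dots> \<le> (B+1) * (1/2)^K" by simp
      also have "\<dots> < (B+1) * (e / (B+1))" using K B by (intro mult_strict_left_mono) auto
      also have "\<dots> = e" using B by simp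
      finally show ?thesis .
    qed
    show "P (\<lambda>x. s m x - s n x) < e"
    proof (cases "n \<le> m")
      case True then show ?thesis using b[OF True] bb[OF mn(2)] by linarith
    next
      case False
      then have "P (\<lambda>x. s n x - s m x) \<le> B * (1/2)^m" using b by simp
      moreover have "P (\<lambda>x. s n x - s m x) = P (\<lambda>x. s m x - s n x)" using sn_diff_sym s by blast
      ultimately show ?thesis using bb[OF mn(1)] by linarith
    qed
  qed
qed

end

lemma geom_sum_bound: "(\<Sum>i\<in>{n..<m}. (1/2::real)^i) \<le> 2 * (1/2)^n"
proof (cases "n \<le> m")
  case True
  have "(\<Sum>i\<in>{n..<m}. (1/2::real)^i) = 2 * (1/2)^n - 2 * (1/2)^m"
    using True
  proof (induction m rule: dec_induct)
    case base then show ?case by simp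
  next
    case (step m) then show ?case by simp
  qed
  then show ?thesis by simp
next
  case False then show ?thesis by simp
qed



lemma two_norm:
  fixes X :: "('a \<Rightarrow> real) set"
  assumes snP: "sn X P" and snQ: "sn X Q" and cP: "cmpl X P" and cQ: "cmpl X Q"
    and le: "\<forall>f\<in>X. P f \<le> Q f" and nul: "\<forall>f\<in>X. P f = 0 \<longrightarrow> Q f = 0"
  shows "\<exists>C>0. \<forall>f\<in>X. Q f \<le> C * P f"
proof -
  define F where "F k = {f\<in>X. \<forall>\<epsilon>>0. \<exists>g\<in>X. Q g \<le> real k \<and> P (\<lambda>x. g x - f x) < \<epsilon>}" for k :: nat
  define d where "d f g = P (\<lambda>x. f x - g x)" for f g
    have b1: "\<forall>x\<in>X. \<forall>y\<in>X. d x y = d y x" unfolding d_def using sn_diff_sym[OF snP] by blast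
    have b2: "\<forall>x\<in>X. \<forall>y\<in>X. \<forall>z\<in>X. d x z \<le> d x y + d y z" unfolding d_def using sn_tri[OF snP] by blast
    have b3: "\<forall>x\<in>X. d x x = 0" unfolding d_def using sn_diff_self[OF snP] by blast
    have b4: "\<forall>s. (\<forall>n. s n \<in> X) \<and> (\<forall>e>0. \<exists>K. \<forall>m\<ge>K. \<forall>n\<ge>K. d (s m) (s n) < e)
                 \<longrightarrow> (\<exists>x\<in>X. (\<lambda>n. d (s n) x) \<longlonglongrightarrow> 0)"
      using cP unfolding d_def cmpl_def by blast
    have b5: "\<forall>k s x. (\<forall>n. s n \<in> F k) \<and> x \<in> X \<and> (\<lambda>n. d (s n) x) \<longlonglongrightarrow> 0 \<longrightarrow> x \<in> F k"
    proof (intro allI impI)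
      fix k s x assume a: "(\<forall>n. s n \<in> F k) \<and> x \<in> X \<and> (\<lambda>n. d (s n) x) \<longlonglongrightarrow> 0"
      have "\<exists>g\<in>X. Q g \<le> real k \<and> P (\<lambda>y. g y - x y) < \<epsilon>" if e: "\<epsilon> > 0" for \<epsilon>
      proof -
        obtain n where n: "\<bar>d (s n) x\<bar> < \<epsilon>/2"
          using a e unfolding LIMSEQ_iff by (metis diff_zero real_norm_def half_gt_zero order_refl)
        have sn: "s n \<in> X" "\<forall>\<epsilon>>0. \<exists>g\<in>X. Q g \<le> real k \<and> P (\<lambda>x. g x - s n x) < \<epsilon>"
          using a unfolding F_def by auto
        obtain g where g: "g \<in> X" "Q g \<le> real k" "P (\<lambda>y. g y - s n y) < \<epsilon>/2" using sn(2)[rule_format, of "\<epsilon>/2"] e by auto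
        have "P (\<lambda>y. g y - x y) \<le> P (\<lambda>y. g y - s n y) + P (\<lambda>y. s n y - x y)"
          using sn_tri[OF snP g(1) sn(1)] a by blast
        then show ?thesis using g n unfolding d_def by auto
      qed
      then show "x \<in> F k" unfolding F_def using a by blast
    qed
    have b6: "\<forall>k. F k \<subseteq> X" unfolding F_def by blast
    have b7: "X \<subseteq> (\<Union>k. F k)"
    proof
      fix f assume f: "f \<in> X"
      have "Q f \<le> real (nat \<lceil>Q f\<rceil>)" by linarith
      then have "f \<in> F (nat \<lceil>Q f\<rceil>)" unfolding F_def using f sn_diff_self[OF snP, of f] by auto
      then show "f \<in> (\<Union>k. F k)" by blast
    qed
    have b8: "(\<lambda>x. 0) \<in> X" using sn_zero_mem[OF snP] .
  obtain k x0 r where x0: "x0 \<in> X" "r > 0" "\<forall>y\<in>X. d x0 y < r \<longrightarrow> y \<in> F k"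
    using baire_pseudo[OF b1 b2 b3 b4 b5 b6 b7 b8] by blast
  have A: "\<exists>g\<in>X. Q g \<le> 2 * real k \<and> P (\<lambda>x. g x - h x) < \<epsilon>"
    if h: "h \<in> X" "P h < r" and e: "\<epsilon> > 0" for h \<epsilon>
  proof -
    define y1 where "y1 = (\<lambda>x. x0 x + h x)"
    have y1X: "y1 \<in> X" unfolding y1_def using sn_add_mem[OF snP x0(1) h(1)] .
    have "d x0 y1 = P (\<lambda>x. - h x)" unfolding d_def y1_def by simp
    then have "d x0 y1 < r" using sn_neg[OF snP h(1)] h by simp
    then have "y1 \<in> F k" by (rule x0(3)[rule_format, OF y1X])
    then have "\<forall>\<epsilon>>0. \<exists>g\<in>X. Q g \<le> real k \<and> P (\<lambda>x. g x - y1 x) < \<epsilon>" unfolding F_def by blast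
    then obtain g1 where g1: "g1 \<in> X" "Q g1 \<le> real k" "P (\<lambda>x. g1 x - y1 x) < \<epsilon>/2"
      using e by (meson half_gt_zero)
    have "d x0 x0 < r" unfolding d_def using sn_diff_self[OF snP, of x0] x0 by simp
    then have "x0 \<in> F k" by (rule x0(3)[rule_format, OF x0(1)])
    then have "\<forall>\<epsilon>>0. \<exists>g\<in>X. Q g \<le> real k \<and> P (\<lambda>x. g x - x0 x) < \<epsilon>" unfolding F_def by blast
    then obtain g2 where g2: "g2 \<in> X" "Q g2 \<le> real k" "P (\<lambda>x. g2 x - x0 x) < \<epsilon>/2"
      using e by (meson half_gt_zero)
    define g where "g = (\<lambda>x. g1 x - g2 x)"
    have gX: "g \<in> X" unfolding g_def using sn_diff_mem[OF snP g1(1) g2(1)] .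
    have "Q g \<le> Q g1 + Q g2" unfolding g_def using sn_sub[OF snQ g1(1) g2(1)] .
    then have Qg: "Q g \<le> 2 * real k" using g1 g2 by linarith
    have eq: "(\<lambda>x. g x - h x) = (\<lambda>x. (g1 x - y1 x) + - (g2 x - x0 x))"
      unfolding g_def y1_def by (auto simp: algebra_simps)
    have m1: "(\<lambda>x. g1 x - y1 x) \<in> X" using sn_diff_mem[OF snP g1(1) y1X] .
    have m2: "(\<lambda>x. - (g2 x - x0 x)) \<in> X" using sn_scale_mem[OF snP sn_diff_mem[OF snP g2(1) x0(1)], of "-1"] by simp
    have "P (\<lambda>x. g x - h x) \<le> P (\<lambda>x. g1 x - y1 x) + P (\<lambda>x. - (g2 x - x0 x))"
      unfolding eq using sn_add[OF snP m1 m2] .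
    also have "P (\<lambda>x. - (g2 x - x0 x)) = P (\<lambda>x. g2 x - x0 x)"
      using sn_neg[OF snP sn_diff_mem[OF snP g2(1) x0(1)]] .
    finally have "P (\<lambda>x. g x - h x) < \<epsilon>" using g1 g2 by linarith
    then show ?thesis using gX Qg by blast
  qed
  define K where "K = 2 * real k + 1"
  have Kpos: "K > 0" unfolding K_def by simp
  have B: "\<exists>g\<in>X. Q g \<le> t * K \<and> P (\<lambda>x. g x - h x) < \<epsilon>"
    if h: "h \<in> X" "P h < t * r" and t: "t > 0" and e: "\<epsilon> > 0" for h t \<epsilon>
  proof -
    define h' where "h' = (\<lambda>x. (1/t) * h x)"
    have h'X: "h' \<in> X" unfolding h'_def using sn_scale_mem[OF snP h(1)] .
    have "P h' = P h / t" unfolding h'_def using sn_scale[OF snP h(1), of "1/t"] t by simp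
    also have "\<dots> < r" using h t by (simp add: field_simps)
    finally obtain g' where g': "g' \<in> X" "Q g' \<le> 2 * real k" "P (\<lambda>x. g' x - h' x) < \<epsilon> / t"
      using A[OF h'X] e t by (meson divide_pos_pos)
    define g where "g = (\<lambda>x. t * g' x)"
    have gX: "g \<in> X" unfolding g_def using sn_scale_mem[OF snP g'(1)] .
    have "Q g = t * Q g'" unfolding g_def using sn_scale[OF snQ g'(1)] t by simp
    also have "\<dots> \<le> t * K" using g'(2) t unfolding K_def by simp
    finally have Qg: "Q g \<le> t * K" .
    have eq: "(\<lambda>x. g x - h x) = (\<lambda>x. t * (g' x - h' x))"
      unfolding g_def h'_def using t by (auto simp: algebra_simps)
    have "P (\<lambda>x. g x - h x) = t * P (\<lambda>x. g' x - h' x)"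
      unfolding eq using sn_scale[OF snP sn_diff_mem[OF snP g'(1) h'X]] t by simp
    also have "\<dots> < t * (\<epsilon> / t)" using g'(3) t by (intro mult_strict_left_mono) auto
    also have "\<dots> = \<epsilon>" using t by simp
    finally show ?thesis using gX Qg by blast
  qed
  have Cb: "Q h \<le> 2 * K" if h: "h \<in> X" "P h < r" for h
  proof -
    have stp: "\<exists>g. g \<in> X \<and> Q g \<le> K * (1/2)^n \<and> P (\<lambda>x. e x - g x) < r * (1/2)^(Suc n)"
      if e: "e \<in> X" "P e < r * (1/2)^n" for e n
    proof -
      have "P e < (1/2)^n * r" using e by (simp add: mult.commute)
      then obtain g where g: "g \<in> X" "Q g \<le> (1/2)^n * K" "P (\<lambda>x. g x - e x) < r * (1/2)^(Suc n)"
        using B[OF e(1), of "(1/2)^n" "r * (1/2)^(Suc n)"] x0(2) by auto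
      have "P (\<lambda>x. e x - g x) = P (\<lambda>x. g x - e x)" using sn_diff_sym[OF snP e(1) g(1)] .
      then show ?thesis using g by (auto simp: mult.commute)
    qed
    define G where "G n e = (SOME g. g \<in> X \<and> Q g \<le> K * (1/2)^n \<and> P (\<lambda>x. e x - g x) < r * (1/2)^(Suc n))" for n e
    have Gp: "G n e \<in> X \<and> Q (G n e) \<le> K * (1/2)^n \<and> P (\<lambda>x. e x - G n e x) < r * (1/2)^(Suc n)"
      if "e \<in> X" "P e < r * (1/2)^n" for e n
      unfolding G_def by (rule someI_ex[OF stp[OF that]])
    define es where "es = rec_nat h (\<lambda>n e. (\<lambda>x. e x - G n e x))"
    have es0: "es 0 = h" by (simp add: es_def)
    have esS: "es (Suc n) = (\<lambda>x. es n x - G n (es n) x)" for n by (simp add: es_def)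
    have inv: "es n \<in> X \<and> P (es n) < r * (1/2)^n" for n
    proof (induction n)
      case 0 then show ?case using h es0 by simp
    next
      case (Suc n)
      have "G n (es n) \<in> X" "P (\<lambda>x. es n x - G n (es n) x) < r * (1/2)^(Suc n)"
        using Gp[of "es n" n] Suc by auto
      then show ?case unfolding esS using sn_diff_mem[OF snP] Suc by auto
    qed
    define gs where "gs n = G n (es n)" for n
    have gs: "gs n \<in> X" "Q (gs n) \<le> K * (1/2)^n" for n
      using Gp[of "es n" n] inv[of n] unfolding gs_def by auto
    define S where "S m = (\<lambda>x. \<Sum>i<m. gs i x)" for m
    have esS': "es m = (\<lambda>x. h x - S m x)" for m
    proof (induction m)
      case 0 then show ?case by (simp add: es0 S_def)
    next
      case (Suc m) then show ?case unfolding esS S_def gs_def by (simp add: algebra_simps)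
    qed
    have SX: "S m \<in> X" for m using sn_sum[OF snQ, of "{..<m}" gs] gs unfolding S_def by auto
    have Sdiff: "Q (\<lambda>x. S m x - S n x) \<le> (2 * K) * (1/2)^n" if "n \<le> m" for m n
    proof -
      have eq: "(\<lambda>x. S m x - S n x) = (\<lambda>x. \<Sum>i\<in>{n..<m}. gs i x)"
        unfolding S_def using that by (simp add: sum_diff_nat_ivl[of 0 n m, simplified] lessThan_atLeast0)
      have "Q (\<lambda>x. \<Sum>i\<in>{n..<m}. gs i x) \<le> (\<Sum>i\<in>{n..<m}. Q (gs i))"
        using sn_sum[OF snQ, of "{n..<m}" gs] gs by auto
      also have "\<dots> \<le> (\<Sum>i\<in>{n..<m}. K * (1/2)^i)" using gs by (intro sum_mono) auto
      also have "\<dots> = K * (\<Sum>i\<in>{n..<m}. (1/2)^i)" by (simp add: sum_distrib_left)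
      also have "\<dots> \<le> K * (2 * (1/2)^n)" using geom_sum_bound[of n m] Kpos by (intro mult_left_mono) auto
      finally show ?thesis unfolding eq by simp
    qed
    have "\<forall>e>0. \<exists>K. \<forall>m\<ge>K. \<forall>n\<ge>K. Q (\<lambda>x. S m x - S n x) < e"
      using sn_cauchy[OF snQ _ _ Sdiff] SX Kpos by auto
    then obtain H where H: "H \<in> X" "(\<lambda>n. Q (\<lambda>x. S n x - H x)) \<longlonglongrightarrow> 0"
      using cQ SX unfolding cmpl_def by blast
    have QS: "Q (S n) \<le> 2 * K" for n
    proof -
      have "S n = (\<lambda>x. S n x - S 0 x)" by (simp add: S_def)
      then show ?thesis using Sdiff[of 0 n] by simp
    qed
    have QH: "Q H \<le> 2 * K"
    proof (rule LIMSEQ_le_const)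
      show "(\<lambda>n. 2 * K + Q (\<lambda>x. S n x - H x)) \<longlonglongrightarrow> 2 * K"
        using tendsto_add[OF tendsto_const H(2)] by simp
      show "\<exists>N. \<forall>n\<ge>N. Q H \<le> 2 * K + Q (\<lambda>x. S n x - H x)"
      proof (intro exI allI impI)
        fix n
        have "Q (\<lambda>x. S n x - (S n x - H x)) \<le> Q (S n) + Q (\<lambda>x. S n x - H x)"
          using sn_sub[OF snQ SX sn_diff_mem[OF snQ SX H(1)]] .
        then show "Q H \<le> 2 * K + Q (\<lambda>x. S n x - H x)" using QS[of n] by simp
      qed
    qed
    have PhH: "P (\<lambda>x. h x - H x) \<le> 0"
    proof (rule LIMSEQ_le_const)
      have "(\<lambda>n. r * (1/2::real)^n) \<longlonglongrightarrow> r * 0"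
        by (intro tendsto_mult tendsto_const LIMSEQ_power_zero) auto
      then show "(\<lambda>n. r * (1/2)^n + Q (\<lambda>x. S n x - H x)) \<longlonglongrightarrow> 0"
        using tendsto_add[OF _ H(2)] by fastforce
      show "\<exists>N. \<forall>n\<ge>N. P (\<lambda>x. h x - H x) \<le> r * (1/2)^n + Q (\<lambda>x. S n x - H x)"
      proof (intro exI allI impI)
        fix n
        have "P (\<lambda>x. h x - H x) \<le> P (\<lambda>x. h x - S n x) + P (\<lambda>x. S n x - H x)"
          using sn_tri[OF snP h(1) SX H(1)] .
        moreover have "P (\<lambda>x. h x - S n x) < r * (1/2)^n" using inv[of n] esS'[of n] by simp
        moreover have "P (\<lambda>x. S n x - H x) \<le> Q (\<lambda>x. S n x - H x)"
          using le sn_diff_mem[OF snP SX H(1)] by blast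
        ultimately show "P (\<lambda>x. h x - H x) \<le> r * (1/2)^n + Q (\<lambda>x. S n x - H x)" by linarith
      qed
    qed
    have hHX: "(\<lambda>x. h x - H x) \<in> X" using sn_diff_mem[OF snP h(1) H(1)] .
    then have "P (\<lambda>x. h x - H x) = 0" using PhH sn_nn[OF snP] by (meson antisym)
    then have QhH: "Q (\<lambda>x. h x - H x) = 0" using nul hHX by blast
    have "Q (\<lambda>x. H x + (h x - H x)) \<le> Q H + Q (\<lambda>x. h x - H x)" using sn_add[OF snQ H(1) hHX] .
    then have "Q h \<le> Q H" using QhH by simp
    then show ?thesis using QH by simp
  qed
  define C where "C = 4 * K / r"
  show ?thesis
  proof (intro exI conjI ballI)
    show "C > 0" unfolding C_def using Kpos x0 by simp
    fix f assume f: "f \<in> X"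
    show "Q f \<le> C * P f"
    proof (cases "P f = 0")
      case True then show ?thesis using nul f by simp
    next
      case False
      then have Pf: "P f > 0" using sn_nn[OF snP f] by simp
      define c where "c = r / (2 * P f)"
      have c: "c > 0" unfolding c_def using Pf x0 by simp
      have hX: "(\<lambda>x. c * f x) \<in> X" using sn_scale_mem[OF snP f] .
      have "P (\<lambda>x. c * f x) = c * P f" using sn_scale[OF snP f, of c] c by simp
      also have "\<dots> = r / 2" unfolding c_def using Pf by simp
      finally have "P (\<lambda>x. c * f x) = r / 2" .
      then have "Q (\<lambda>x. c * f x) \<le> 2 * K" using Cb[OF hX] x0 by simp
      then have "c * Q f \<le> 2 * K" using sn_scale[OF snQ f] c by simp
      then have "r * Q f \<le> 2 * K * (2 * P f)" unfolding c_def using Pf by (simp add: field_simps)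
      then show ?thesis unfolding C_def using x0 Pf by (simp add: field_simps)
    qed
  qed
qed



lemma fast_subseq:
  fixes a e :: "nat \<Rightarrow> real"
  assumes a: "a \<longlonglongrightarrow> 0" and e: "\<forall>n. e n > 0"
  shows "\<exists>r. strict_mono r \<and> (\<forall>n. \<bar>a (r n)\<bar> < e n)"
proof -
  have "\<forall>n. \<exists>N. \<forall>m\<ge>N. \<bar>a m\<bar> < e n"
    using a e unfolding LIMSEQ_iff by (metis diff_zero real_norm_def)
  then obtain Nf where Nf: "\<And>n m. m \<ge> Nf n \<Longrightarrow> \<bar>a m\<bar> < e n" by metis
  define r where "r = rec_nat (Nf 0) (\<lambda>n k. max (Nf (Suc n)) (Suc k))"
  have r0: "r 0 = Nf 0" and rS: "r (Suc n) = max (Nf (Suc n)) (Suc (r n))" for n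
    by (simp_all add: r_def)
  have "strict_mono r" unfolding strict_mono_Suc_iff using rS by (simp add: less_max_iff_disj)
  moreover have "r n \<ge> Nf n" for n by (cases n) (simp_all add: r0 rS)
  ultimately show ?thesis using Nf by blast
qed

context
  fixes M :: "'a measure" and X :: "('a \<Rightarrow> real) set" and N
  assumes brf: "banach_rect_fs M X N"
begin

lemma brf_sn: "sn X N" using brf unfolding banach_rect_fs_def sn_def by blast
lemma brf_cmpl: "cmpl X N" using brf unfolding banach_rect_fs_def cmpl_def by blast
lemma brf_meas: "f \<in> X \<Longrightarrow> f \<in> borel_measurable M" using brf unfolding banach_rect_fs_def by blast
lemma brf_ae: "f \<in> X \<Longrightarrow> g \<in> borel_measurable M \<Longrightarrow> (AE x in M. f x = g x) \<Longrightarrow> g \<in> X"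
  using brf unfolding banach_rect_fs_def by blast
lemma brf_Neq: "f \<in> X \<Longrightarrow> g \<in> X \<Longrightarrow> (AE x in M. f x = g x) \<Longrightarrow> N f = N g"
  using brf unfolding banach_rect_fs_def by blast
lemma brf_null: "f \<in> X \<Longrightarrow> N f = 0 \<longleftrightarrow> (AE x in M. f x = 0)"
  using brf unfolding banach_rect_fs_def by blast

lemma brf_abs: "\<exists>C>0. \<forall>f\<in>X. (\<lambda>x. \<bar>f x\<bar>) \<in> X \<and> N (\<lambda>x. \<bar>f x\<bar>) \<le> C * N f"
proof -
  obtain C where C: "C > 0" "\<forall>f\<in>X. \<forall>A\<in>sets M.
          (\<lambda>x. indicator A x * f x) \<in> X \<and> N (\<lambda>x. indicator A x * f x) \<le> C * N f"
    using brf unfolding banach_rect_fs_def by blast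
  have "(\<lambda>x. \<bar>f x\<bar>) \<in> X \<and> N (\<lambda>x. \<bar>f x\<bar>) \<le> (2*C) * N f" if f: "f \<in> X" for f
  proof -
    have fm: "f \<in> borel_measurable M" using brf_meas f .
    define A where "A = {x\<in>space M. f x \<ge> 0}"
    define B where "B = {x\<in>space M. f x < 0}"
    have AB: "A \<in> sets M" "B \<in> sets M" unfolding A_def B_def using fm by measurable
    define u1 where "u1 = (\<lambda>x. indicator A x * f x)"
    define u2 where "u2 = (\<lambda>x. indicator B x * f x)"
    have u: "u1 \<in> X" "N u1 \<le> C * N f" "u2 \<in> X" "N u2 \<le> C * N f"
      unfolding u1_def u2_def using C f AB by blast+
    define w where "w = (\<lambda>x. u1 x + (-1) * u2 x)"
    have wX: "w \<in> X" unfolding w_def using sn_add_mem[OF brf_sn u(1) sn_scale_mem[OF brf_sn u(3)]] .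
    have "N w \<le> N u1 + N (\<lambda>x. (-1) * u2 x)"
      unfolding w_def using sn_add[OF brf_sn u(1) sn_scale_mem[OF brf_sn u(3)]] .
    also have "N (\<lambda>x. (-1) * u2 x) = N u2" using sn_scale[OF brf_sn u(3), of "-1"] by simp
    finally have Nw: "N w \<le> (2*C) * N f" using u by linarith
    have ae: "AE x in M. w x = \<bar>f x\<bar>"
      by (rule AE_I2) (auto simp: w_def u1_def u2_def A_def B_def indicator_def)
    have absm: "(\<lambda>x. \<bar>f x\<bar>) \<in> borel_measurable M" using fm by measurable
    have absX: "(\<lambda>x. \<bar>f x\<bar>) \<in> X" using brf_ae[OF wX absm ae] .
    have "N w = N (\<lambda>x. \<bar>f x\<bar>)" using brf_Neq[OF wX absX ae] .
    then show ?thesis using absX Nw by simp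
  qed
  then show ?thesis using C by (intro exI[of _ "2*C"]) auto
qed

end

context
  fixes M :: "'a measure" and X Y :: "('a \<Rightarrow> real) set" and T and NX :: "('a \<Rightarrow> real) \<Rightarrow> real"
  assumes plo: "positive_linear_op M X Y T" and snX: "sn X NX"
begin

lemma T_mem: "f \<in> X \<Longrightarrow> T f \<in> Y" using plo unfolding positive_linear_op_def by blast
lemma T_ae: "f \<in> X \<Longrightarrow> g \<in> X \<Longrightarrow> (AE x in M. f x = g x) \<Longrightarrow> (AE x in M. T f x = T g x)"
  using plo unfolding positive_linear_op_def by blast
lemma T_add: "f \<in> X \<Longrightarrow> g \<in> X \<Longrightarrow> AE x in M. T (\<lambda>y. f y + g y) x = T f x + T g x"
  using plo unfolding positive_linear_op_def by blast
lemma T_scale: "f \<in> X \<Longrightarrow> AE x in M. T (\<lambda>y. c * f y) x = c * T f x"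
  using plo unfolding positive_linear_op_def by blast
lemma T_pos: "f \<in> X \<Longrightarrow> (AE x in M. f x \<ge> 0) \<Longrightarrow> (AE x in M. T f x \<ge> 0)"
  using plo unfolding positive_linear_op_def by blast

lemma T_diff: "f \<in> X \<Longrightarrow> g \<in> X \<Longrightarrow> AE x in M. T (\<lambda>y. f y - g y) x = T f x - T g x"
proof -
  assume f: "f \<in> X" and g: "g \<in> X"
  have g': "(\<lambda>y. (-1) * g y) \<in> X" using sn_scale_mem[OF snX g] .
  have eq: "(\<lambda>y. f y - g y) = (\<lambda>y. f y + (\<lambda>y. (-1) * g y) y)" by simp
  show ?thesis
    using T_add[OF f g'] T_scale[OF g, of "-1"] unfolding eq by eventually_elim simp
qed

lemma T_zero: "AE x in M. T (\<lambda>y. 0) x = 0"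
  using T_scale[OF sn_zero_mem[OF snX], of 0] by simp

lemma T_mono: "f \<in> X \<Longrightarrow> g \<in> X \<Longrightarrow> (AE x in M. f x \<le> g x) \<Longrightarrow> (AE x in M. T f x \<le> T g x)"
proof -
  assume f: "f \<in> X" and g: "g \<in> X" and le: "AE x in M. f x \<le> g x"
  have "AE x in M. T (\<lambda>y. g y - f y) x \<ge> 0"
    using T_pos[OF sn_diff_mem[OF snX g f]] le by (simp add: eventually_mono)
  then show ?thesis using T_diff[OF g f] by eventually_elim simp
qed

lemma T_abs: "f \<in> X \<Longrightarrow> (\<lambda>y. \<bar>f y\<bar>) \<in> X \<Longrightarrow> AE x in M. \<bar>T f x\<bar> \<le> T (\<lambda>y. \<bar>f y\<bar>) x"
proof -
  assume f: "f \<in> X" and a: "(\<lambda>y. \<bar>f y\<bar>) \<in> X"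
  have m: "(\<lambda>y. (-1) * f y) \<in> X" using sn_scale_mem[OF snX f] .
  have 1: "AE x in M. T f x \<le> T (\<lambda>y. \<bar>f y\<bar>) x" using T_mono[OF f a] by simp
  have 2: "AE x in M. T (\<lambda>y. (-1) * f y) x \<le> T (\<lambda>y. \<bar>f y\<bar>) x" using T_mono[OF m a] by simp
  show ?thesis using 1 2 T_scale[OF f, of "-1"] by eventually_elim auto
qed

end



lemma closed_graph:
  assumes bX: "banach_rect_fs M X NX" and spX: "subsequence_property M X NX"
    and bY: "banach_rect_fs M Y NY" and spY: "subsequence_property M Y NY"
    and plo: "positive_linear_op M X Y T"
    and s: "\<forall>n. s n \<in> X" and f: "f \<in> X" and lim: "(\<lambda>n. NX (\<lambda>x. s n x - f x)) \<longlonglongrightarrow> 0"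
    and g: "g \<in> Y" and limT: "(\<lambda>n. NY (\<lambda>x. T (s n) x - g x)) \<longlonglongrightarrow> 0"
  shows "AE x in M. T f x = g x"
proof -
  note snX = brf_sn[OF bX]
  obtain r where r: "strict_mono r" "\<forall>n. \<bar>NX (\<lambda>x. s (r n) x - f x)\<bar> < (1/4)^n"
    using fast_subseq[OF lim, of "\<lambda>n. (1/4)^n"] by auto
  define u where "u n = (\<lambda>x. s (r n) x - f x)" for n
  have uX: "u n \<in> X" for n unfolding u_def using sn_diff_mem[OF snX] s f by blast
  have Nu: "NX (u n) < (1/4)^n" for n using r(2) unfolding u_def by (meson abs_less_iff)
  obtain Ca where Ca: "Ca > 0" "\<forall>f\<in>X. (\<lambda>x. \<bar>f x\<bar>) \<in> X \<and> NX (\<lambda>x. \<bar>f x\<bar>) \<le> Ca * NX f"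
    using brf_abs[OF bX] by blast
  have auX: "(\<lambda>x. \<bar>u n x\<bar>) \<in> X" for n using Ca uX by blast
  define v where "v n = (\<lambda>x. 2^n * \<bar>u n x\<bar>)" for n
  have vX: "v n \<in> X" for n unfolding v_def using sn_scale_mem[OF snX auX] .
  have Nv: "NX (v n) \<le> Ca * (1/2)^n" for n
  proof -
    have "NX (v n) = 2^n * NX (\<lambda>x. \<bar>u n x\<bar>)" unfolding v_def using sn_scale[OF snX auX, of "2^n" n] by simp
    also have "\<dots> \<le> 2^n * (Ca * NX (u n))" using Ca uX by (intro mult_left_mono) auto
    also have "\<dots> \<le> 2^n * (Ca * (1/4)^n)" using Nu[of n] Ca by (intro mult_left_mono) auto
    also have "\<dots> = Ca * ((2::real)^n * (1/4)^n)" by simp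
    also have "(2::real)^n * (1/4)^n = (2 * (1/4))^n" by (rule power_mult_distrib[symmetric])
    also have "(2 * (1/4::real))^n = (1/2)^n" by simp
    finally show ?thesis .
  qed
  define Ps where "Ps m = (\<lambda>x. \<Sum>i<m. v i x)" for m
  have PsX: "Ps m \<in> X" for m using sn_sum[OF snX, of "{..<m}" v] vX unfolding Ps_def by auto
  have Psdiff: "NX (\<lambda>x. Ps m x - Ps n x) \<le> (2 * Ca) * (1/2)^n" if "n \<le> m" for m n
  proof -
    have eq: "(\<lambda>x. Ps m x - Ps n x) = (\<lambda>x. \<Sum>i\<in>{n..<m}. v i x)"
      unfolding Ps_def using that by (simp add: sum_diff_nat_ivl[of 0 n m, simplified] lessThan_atLeast0)
    have "NX (\<lambda>x. \<Sum>i\<in>{n..<m}. v i x) \<le> (\<Sum>i\<in>{n..<m}. NX (v i))"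
      using sn_sum[OF snX, of "{n..<m}" v] vX by auto
    also have "\<dots> \<le> (\<Sum>i\<in>{n..<m}. Ca * (1/2)^i)" using Nv by (intro sum_mono) auto
    also have "\<dots> = Ca * (\<Sum>i\<in>{n..<m}. (1/2)^i)" by (simp add: sum_distrib_left)
    also have "\<dots> \<le> Ca * (2 * (1/2)^n)" using geom_sum_bound[of n m] Ca by (intro mult_left_mono) auto
    finally show ?thesis unfolding eq by simp
  qed
  have "\<forall>e>0. \<exists>K. \<forall>m\<ge>K. \<forall>n\<ge>K. NX (\<lambda>x. Ps m x - Ps n x) < e"
    using sn_cauchy[OF snX _ _ Psdiff] PsX Ca by auto
  then obtain Hs where Hs: "Hs \<in> X" "(\<lambda>n. NX (\<lambda>x. Ps n x - Hs x)) \<longlonglongrightarrow> 0"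
    using brf_cmpl[OF bX] PsX unfolding cmpl_def by blast
  obtain q where q: "strict_mono q" "AE x in M. (\<lambda>n. Ps (q n) x) \<longlonglongrightarrow> Hs x"
    using spX PsX Hs unfolding subsequence_property_def by blast
  have vH: "AE x in M. \<forall>n. v n x \<le> Hs x"
    using q(2)
  proof (rule eventually_mono)
    fix x assume L: "(\<lambda>n. Ps (q n) x) \<longlonglongrightarrow> Hs x"
    show "\<forall>n. v n x \<le> Hs x"
    proof
      fix n
      show "v n x \<le> Hs x"
      proof (rule LIMSEQ_le_const[OF L], intro exI allI impI)
        fix m assume "m \<ge> Suc n"
        then have "n \<in> {..<q m}" using seq_suble[OF q(1), of m] by simp
        moreover have "\<forall>i\<in>{..<q m}. 0 \<le> v i x" unfolding v_def by simp
        ultimately show "v n x \<le> Ps (q m) x" unfolding Ps_def by (intro member_le_sum) auto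
      qed
    qed
  qed
  have bnd: "AE x in M. 2^n * \<bar>T (s (r n)) x - T f x\<bar> \<le> T Hs x" for n
  proof -
    have a1: "AE x in M. T (v n) x \<le> T Hs x"
      using T_mono[OF plo snX vX Hs(1)] vH by (simp add: eventually_mono)
    have a2: "AE x in M. T (v n) x = 2^n * T (\<lambda>y. \<bar>u n y\<bar>) x"
      unfolding v_def using T_scale[OF plo snX auX] .
    have a3: "AE x in M. \<bar>T (u n) x\<bar> \<le> T (\<lambda>y. \<bar>u n y\<bar>) x" using T_abs[OF plo snX uX auX] .
    have a4: "AE x in M. T (u n) x = T (s (r n)) x - T f x" unfolding u_def using T_diff[OF plo snX s[rule_format] f] .
    show ?thesis using a1 a2 a3 a4
    proof eventually_elim
      case (elim x)
      have "2^n * \<bar>T (s (r n)) x - T f x\<bar> \<le> 2^n * T (\<lambda>y. \<bar>u n y\<bar>) x"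
        using elim by (intro mult_left_mono) auto
      then show ?case using elim by linarith
    qed
  qed
  have conv1: "AE x in M. (\<lambda>n. T (s (r n)) x) \<longlonglongrightarrow> T f x"
  proof -
    have "AE x in M. \<forall>n. 2^n * \<bar>T (s (r n)) x - T f x\<bar> \<le> T Hs x"
      using bnd by (simp add: AE_all_countable)
    then show ?thesis
    proof (rule eventually_mono)
      fix x assume B: "\<forall>n. 2^n * \<bar>T (s (r n)) x - T f x\<bar> \<le> T Hs x"
      have "(\<lambda>n. T (s (r n)) x - T f x) \<longlonglongrightarrow> 0"
      proof (rule Lim_null_comparison)
        show "\<forall>\<^sub>F n in sequentially. norm (T (s (r n)) x - T f x) \<le> (1/2)^n * T Hs x"
        proof (intro always_eventually allI)
          fix n
          have "\<bar>T (s (r n)) x - T f x\<bar> \<le> T Hs x / 2^n" using B[rule_format, of n]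
            by (simp add: field_simps)
          then show "norm (T (s (r n)) x - T f x) \<le> (1/2)^n * T Hs x"
            by (simp add: power_one_over field_simps)
        qed
        show "(\<lambda>n. (1/2::real)^n * T Hs x) \<longlonglongrightarrow> 0"
          by (intro tendsto_mult_left_zero LIMSEQ_power_zero) auto
      qed
      then have "(\<lambda>n. (T (s (r n)) x - T f x) + T f x) \<longlonglongrightarrow> 0 + T f x"
        by (intro tendsto_add tendsto_const)
      then show "(\<lambda>n. T (s (r n)) x) \<longlonglongrightarrow> T f x" by simp
    qed
  qed
  have limT': "(\<lambda>n. NY (\<lambda>x. T (s (r n)) x - g x)) \<longlonglongrightarrow> 0"
    using LIMSEQ_subseq_LIMSEQ[OF limT r(1)] by (simp add: o_def)
  have TsY: "\<forall>n. T (s (r n)) \<in> Y" using T_mem[OF plo snX] s by blast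
  obtain q' where q': "strict_mono q'" "AE x in M. (\<lambda>n. T (s (r (q' n))) x) \<longlonglongrightarrow> g x"
    using spY[unfolded subsequence_property_def, rule_format, of "\<lambda>n. T (s (r n))" g] TsY g limT'
    by blast
  show ?thesis using conv1 q'(2)
  proof eventually_elim
    case (elim x)
    have "(\<lambda>n. T (s (r (q' n))) x) \<longlonglongrightarrow> T f x"
      using LIMSEQ_subseq_LIMSEQ[OF elim(1) q'(1)] by (simp add: o_def)
    then show ?case using elim(2) LIMSEQ_unique by blast
  qed
qed



lemma part1:
  fixes M :: "'a measure" and X Y :: "('a \<Rightarrow> real) set"
  assumes bX: "banach_rect_fs M X NX" and spX: "subsequence_property M X NX"
    and bY: "banach_rect_fs M Y NY" and spY: "subsequence_property M Y NY"
    and plo: "positive_linear_op M X Y T"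
  shows "\<forall>f\<in>X. \<forall>e>0. \<exists>d>0. \<forall>g\<in>X. NX (\<lambda>x. g x - f x) < d \<longrightarrow> NY (\<lambda>x. T g x - T f x) < e"
proof -
  note snX = brf_sn[OF bX] and snY = brf_sn[OF bY]
  define G where "G f = NX f + NY (T f)" for f
  have TY: "f \<in> X \<Longrightarrow> T f \<in> Y" for f using T_mem[OF plo snX] .
  have Tdiff: "f \<in> X \<Longrightarrow> g \<in> X \<Longrightarrow> NY (T (\<lambda>x. f x - g x)) = NY (\<lambda>x. T f x - T g x)" for f g
    by (rule brf_Neq[OF bY TY[OF sn_diff_mem[OF snX]] sn_diff_mem[OF snY TY TY] T_diff[OF plo snX]])
  have snG: "sn X G"
    unfolding sn_def
  proof (intro conjI ballI allI)
    show "(\<lambda>x. 0) \<in> X" using sn_zero_mem[OF snX] .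
    show "(\<lambda>x. f x + g x) \<in> X" if "f \<in> X" "g \<in> X" for f g using sn_add_mem[OF snX that] .
    show "(\<lambda>x. c * f x) \<in> X" if "f \<in> X" for f c using sn_scale_mem[OF snX that] .
    show "G f \<ge> 0" if "f \<in> X" for f unfolding G_def using sn_nn[OF snX that] sn_nn[OF snY TY[OF that]] by simp
    show "G (\<lambda>x. c * f x) = \<bar>c\<bar> * G f" if f: "f \<in> X" for f c
    proof -
      have "NY (T (\<lambda>x. c * f x)) = NY (\<lambda>x. c * T f x)"
        by (rule brf_Neq[OF bY TY[OF sn_scale_mem[OF snX f]] sn_scale_mem[OF snY TY[OF f]] T_scale[OF plo snX f]])
      then show ?thesis unfolding G_def using sn_scale[OF snX f] sn_scale[OF snY TY[OF f]]
        by (simp add: distrib_left)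
    qed
    show "G (\<lambda>x. f x + g x) \<le> G f + G g" if f: "f \<in> X" and g: "g \<in> X" for f g
    proof -
      have "NY (T (\<lambda>x. f x + g x)) = NY (\<lambda>x. T f x + T g x)"
        by (rule brf_Neq[OF bY TY[OF sn_add_mem[OF snX f g]] sn_add_mem[OF snY TY[OF f] TY[OF g]] T_add[OF plo snX f g]])
      then show ?thesis unfolding G_def using sn_add[OF snX f g] sn_add[OF snY TY[OF f] TY[OF g]]
        by simp
    qed
  qed
  have le: "\<forall>f\<in>X. NX f \<le> G f" unfolding G_def using sn_nn[OF snY TY] by auto
  have cG: "cmpl X G"
    unfolding cmpl_def
  proof (intro allI impI)
    fix s :: "nat \<Rightarrow> 'a \<Rightarrow> real" assume a: "(\<forall>n. s n \<in> X) \<and> (\<forall>e>0. \<exists>K. \<forall>m\<ge>K. \<forall>n\<ge>K. G (\<lambda>x. s m x - s n x) < e)"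
    have sX: "s n \<in> X" for n using a by blast
    have dX: "(\<lambda>x. s m x - s n x) \<in> X" for m n using sn_diff_mem[OF snX sX sX] .
    have c1: "\<forall>e>0. \<exists>K. \<forall>m\<ge>K. \<forall>n\<ge>K. NX (\<lambda>x. s m x - s n x) < e"
      using a le dX by (meson order.strict_trans1)
    obtain f where f: "f \<in> X" "(\<lambda>n. NX (\<lambda>x. s n x - f x)) \<longlonglongrightarrow> 0"
      using brf_cmpl[OF bX] c1 sX unfolding cmpl_def by blast
    have GT: "NY (\<lambda>x. T (s m) x - T (s n) x) \<le> G (\<lambda>x. s m x - s n x)" for m n
      unfolding G_def using Tdiff[OF sX sX, of m n] sn_nn[OF snX dX] by simp
    have c2: "\<forall>e>0. \<exists>K. \<forall>m\<ge>K. \<forall>n\<ge>K. NY (\<lambda>x. T (s m) x - T (s n) x) < e"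
      using a GT by (meson order.strict_trans1)
    obtain g where g: "g \<in> Y" "(\<lambda>n. NY (\<lambda>x. T (s n) x - g x)) \<longlonglongrightarrow> 0"
      using brf_cmpl[OF bY, unfolded cmpl_def, rule_format, of "\<lambda>n. T (s n)"] c2 TY[OF sX] by blast
    have Tfg: "AE x in M. T f x = g x"
      by (rule closed_graph[OF bX spX bY spY plo _ f(1) f(2) g(1) g(2)]) (use sX in blast)
    have eqn: "NY (T (\<lambda>x. s n x - f x)) = NY (\<lambda>x. T (s n) x - g x)" for n
    proof -
      have "NY (T (\<lambda>x. s n x - f x)) = NY (\<lambda>x. T (s n) x - T f x)" using Tdiff[OF sX f(1)] .
      also have "\<dots> = NY (\<lambda>x. T (s n) x - g x)"
        by (rule brf_Neq[OF bY sn_diff_mem[OF snY TY[OF sX] TY[OF f(1)]] sn_diff_mem[OF snY TY[OF sX] g(1)]])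
           (use Tfg in \<open>auto elim: eventually_mono\<close>)
      finally show ?thesis .
    qed
    have "(\<lambda>n. G (\<lambda>x. s n x - f x)) \<longlonglongrightarrow> 0 + 0"
      unfolding G_def eqn by (intro tendsto_add f(2) g(2))
    then show "\<exists>f\<in>X. (\<lambda>n. G (\<lambda>x. s n x - f x)) \<longlonglongrightarrow> 0" using f(1) by auto
  qed
  have nul: "\<forall>f\<in>X. NX f = 0 \<longrightarrow> G f = 0"
  proof (intro ballI impI)
    fix f assume f: "f \<in> X" and z: "NX f = 0"
    have "AE x in M. f x = 0" using brf_null[OF bX f] z by simp
    then have "AE x in M. T f x = T (\<lambda>y. 0) x" using T_ae[OF plo snX f sn_zero_mem[OF snX]] by simp
    then have "AE x in M. T f x = 0" using T_zero[OF plo snX] by eventually_elim simp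
    then have "NY (T f) = 0" using brf_null[OF bY TY[OF f]] by simp
    then show "G f = 0" unfolding G_def using z by simp
  qed
  obtain C where C: "C > 0" "\<forall>f\<in>X. G f \<le> C * NX f"
    using two_norm[OF snX snG brf_cmpl[OF bX] cG le nul] by blast
  show ?thesis
  proof (intro ballI allI impI)
    fix f e assume f: "f \<in> X" and e: "(e::real) > 0"
    show "\<exists>d>0. \<forall>g\<in>X. NX (\<lambda>x. g x - f x) < d \<longrightarrow> NY (\<lambda>x. T g x - T f x) < e"
    proof (intro exI conjI ballI impI)
      show "e / C > 0" using e C by simp
      fix g assume g: "g \<in> X" and lt: "NX (\<lambda>x. g x - f x) < e / C"
      have dX: "(\<lambda>x. g x - f x) \<in> X" using sn_diff_mem[OF snX g f] .
      have "NY (\<lambda>x. T g x - T f x) = NY (T (\<lambda>x. g x - f x))" using Tdiff[OF g f] by simp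
      also have "\<dots> \<le> G (\<lambda>x. g x - f x)" unfolding G_def using sn_nn[OF snX dX] by simp
      also have "\<dots> \<le> C * NX (\<lambda>x. g x - f x)" using C dX by blast
      also have "\<dots> < C * (e / C)" using lt C by (intro mult_strict_left_mono) auto
      also have "\<dots> = e" using C by simp
      finally show "NY (\<lambda>x. T g x - T f x) < e" .
    qed
  qed
qed

lemma id_plo: "positive_linear_op M X X (\<lambda>f. f)"
  unfolding positive_linear_op_def by auto

lemma cont_bound:
  assumes snN: "sn X N" and snN0: "sn X N0" and nul: "\<forall>g\<in>X. N g = 0 \<longrightarrow> N0 g = 0"
    and d: "d > 0" and c: "\<forall>g\<in>X. N g < d \<longrightarrow> N0 g < 1"
  shows "\<forall>f\<in>X. N0 f \<le> (2 / d) * N f"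
proof
  fix f assume f: "f \<in> X"
  show "N0 f \<le> (2 / d) * N f"
  proof (cases "N f = 0")
    case True then show ?thesis using nul f by simp
  next
    case False
    then have Pf: "N f > 0" using sn_nn[OF snN f] by simp
    define c where "c = d / (2 * N f)"
    have cp: "c > 0" unfolding c_def using Pf d by simp
    have hX: "(\<lambda>x. c * f x) \<in> X" using sn_scale_mem[OF snN f] .
    have "N (\<lambda>x. c * f x) = c * N f" using sn_scale[OF snN f, of c] cp by simp
    also have "\<dots> = d / 2" unfolding c_def using Pf by simp
    finally have "N (\<lambda>x. c * f x) < d" using d by simp
    then have "N0 (\<lambda>x. c * f x) < 1" using c hX by blast
    then have "c * N0 f < 1" using sn_scale[OF snN0 f, of c] cp by simp
    then have "d * N0 f < 2 * N f" unfolding c_def using Pf by (simp add: field_simps)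
    then show ?thesis using d by (simp add: field_simps)
  qed
qed

lemma part2:
  assumes b: "banach_rect_fs M X N" and sp: "subsequence_property M X N"
    and b0: "banach_rect_fs M X N0" and sp0: "subsequence_property M X N0"
  shows "\<exists>C>0. \<forall>f\<in>X. N0 f \<le> C * N f"
proof -
  have cont: "\<forall>f\<in>X. \<forall>e>0. \<exists>d>0. \<forall>g\<in>X. N (\<lambda>x. g x - f x) < d \<longrightarrow> N0 (\<lambda>x. g x - f x) < e"
    using part1[OF b sp b0 sp0 id_plo] by simp
  obtain d where d: "d > 0" "\<forall>g\<in>X. N (\<lambda>x. g x - 0) < d \<longrightarrow> N0 (\<lambda>x. g x - 0) < 1"
    using cont sn_zero_mem[OF brf_sn[OF b]] by (meson zero_less_one)
  have nul: "\<forall>g\<in>X. N g = 0 \<longrightarrow> N0 g = 0" using brf_null[OF b] brf_null[OF b0] by blast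
  have "\<forall>f\<in>X. N0 f \<le> (2 / d) * N f"
    using cont_bound[OF brf_sn[OF b] brf_sn[OF b0] nul d(1)] d(2) by simp
  then show ?thesis using d(1) by (intro exI[of _ "2/d"]) auto
qed

theorem corollary4p4:
  fixes M :: "'a measure"
  assumes "finite_measure M"
  shows "(\<forall>X NX Y NY T.
            banach_rect_fs M X NX \<and> subsequence_property M X NX \<and>
            banach_rect_fs M Y NY \<and> subsequence_property M Y NY \<and>
            positive_linear_op M X Y T
            \<longrightarrow> (\<forall>f\<in>X. \<forall>e>0. \<exists>d>0. \<forall>g\<in>X.
                   NX (\<lambda>x. g x - f x) < d \<longrightarrow> NY (\<lambda>x. T g x - T f x) < e))
       \<and> (\<forall>X N N0.
            banach_rect_fs M X N \<and> subsequence_property M X N \<and>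
            banach_rect_fs M X N0 \<and> subsequence_property M X N0
            \<longrightarrow> (\<exists>c>0. \<exists>C>0. \<forall>f\<in>X. c * N0 f \<le> N f \<and> N f \<le> C * N0 f))"
proof (intro conjI allI impI)
  fix X NX Y NY T
  assume a: "banach_rect_fs M X NX \<and> subsequence_property M X NX \<and>
            banach_rect_fs M Y NY \<and> subsequence_property M Y NY \<and>
            positive_linear_op M X Y T"
  show "\<forall>f\<in>X. \<forall>e>0. \<exists>d>0. \<forall>g\<in>X.
                   NX (\<lambda>x. g x - f x) < d \<longrightarrow> NY (\<lambda>x. T g x - T f x) < e"
    by (rule part1[where M=M and Y=Y]) (use a in simp_all)
next
  fix X N N0
  assume a: "banach_rect_fs M X N \<and> subsequence_property M X N \<and>
            banach_rect_fs M X N0 \<and> subsequence_property M X N0"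
  have p1: "\<exists>C>0. \<forall>f\<in>X. N0 f \<le> C * N f" by (rule part2[where M=M]) (use a in simp_all)
  have p2: "\<exists>C>0. \<forall>f\<in>X. N f \<le> C * N0 f" by (rule part2[where M=M]) (use a in simp_all)
  obtain C1 where C1: "C1 > 0" "\<forall>f\<in>X. N0 f \<le> C1 * N f" using p1 by blast
  obtain C2 where C2: "C2 > 0" "\<forall>f\<in>X. N f \<le> C2 * N0 f" using p2 by blast
  show "\<exists>c>0. \<exists>C>0. \<forall>f\<in>X. c * N0 f \<le> N f \<and> N f \<le> C * N0 f"
  proof (intro exI conjI ballI)
    show "1 / C1 > 0" "C2 > 0" using C1 C2 by auto
    fix f assume f: "f \<in> X"
    show "N f \<le> C2 * N0 f" using C2 f by blast
    have "N0 f \<le> C1 * N f" using C1 f by blast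
    then show "1 / C1 * N0 f \<le> N f" using C1 by (simp add: field_simps)
  qed
qed


end
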